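(* Let $n,k,h,d$ be integers with $k\ge1$ and $2\le h\le n-d\le n-k$, set $s=d+1-k$, let $F$ be a finite field with $|F|\ge sn$, let $\{\lambda_{i,j}: i\in[n],\ j\in\{0,\dots,s-1\}\}$ be $sn$ distinct elements of $F$, and let $\mathcal{C}$ be the set of all $C=(C_1,\dots,C_n)$, $C_i=(c_{i,b,a}: b\in\{1,\dots,d+h-k\},\ a\in\{0,\dots,s^n-1\})$, satisfying $\sum_{i=1}^n \lambda_{i,a_i}^t c_{i,b,a}=0$ for all $t\in\{0,\dots,n-k-1\}$, $b\in\{1,\dots,d+h-k\}$, $a\in\{0,\dots,s^n-1\}$. Let $\mathcal{R}\subseteq[n]\setminus[h]$ with $|\mathcal{R}|=d$ and let $u\in[h]$. Then for every $C\in\mathcal{C}$, the values $$\{c_{u,b,a}: a\in\{0,\dots,s^n-1\},\ b\in\{1,\dots,s-1,s+u-1\}\}\ \cup\ \Big\{\sum_{j=0}^{s-2}c_{i,j+1,a(u,a_u\oplus j)}+c_{i,s+u-1,a(u,a_u\oplus(s-1))}: a\in\{0,\dots,s^n-1\},\ i\in[h]\setminus\{u\}\Big\}$$ are uniquely determined by the values $$\Big\{\sum_{j=0}^{s-2}c_{i,j+1,a(u,a_u\oplus j)}+c_{i,s+u-1,a(u,a_u\oplus(s-1))}: a\in\{0,\dots,s^n-1\},\ i\in\mathcal{R}\Big\},$$ i.e. any two codewords of $\mathcal{C}$ agreeing on the latter values agree on the former values.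
   Context: $[n]=\{1,\dots,n\}$. For $a\in\{0,\dots,s^n-1\}$, $(a_1,\dots,a_n)\in\{0,\dots,s-1\}^n$ denotes its $n$-digit $s$-ary expansion, and $a$ is identified with this tuple. For $i\in[n]$, $v\in\{0,\dots,s-1\}$, $a(i,v)$ denotes the element obtained from $a$ by replacing the $i$th digit $a_i$ by $v$; $\oplus$ denotes addition modulo $s$. Empty sums (when $s=1$) are zero. *)

theory Defs
  imports Main
begin

text \<open>The i-th digit (i in 1..n) of the n-digit s-ary expansion of a, a_1 most significant.\<close>
definition digit :: "nat \<Rightarrow> nat \<Rightarrow> nat \<Rightarrow> nat \<Rightarrow> nat" where
  "digit s n a i = (a div s ^ (n - i)) mod s"

definition set_digit :: "nat \<Rightarrow> nat \<Rightarrow> nat \<Rightarrow> nat \<Rightarrow> nat \<Rightarrow> nat" where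
  "set_digit s n a i v = a - digit s n a i * s ^ (n - i) + v * s ^ (n - i)"

definition code :: "nat \<Rightarrow> nat \<Rightarrow> nat \<Rightarrow> nat \<Rightarrow> nat \<Rightarrow> (nat \<Rightarrow> nat \<Rightarrow> 'a::field)
    \<Rightarrow> (nat \<Rightarrow> nat \<Rightarrow> nat \<Rightarrow> 'a) set" where
  "code n k h d s lam = {c. \<forall>t<n - k. \<forall>b\<in>{1..d + h - k}. \<forall>a<s ^ n.
      (\<Sum>i=1..n. lam i (digit s n a i) ^ t * c i b a) = 0}"

definition rep :: "nat \<Rightarrow> nat \<Rightarrow> nat \<Rightarrow> (nat \<Rightarrow> nat \<Rightarrow> nat \<Rightarrow> 'a::field) \<Rightarrow> nat \<Rightarrow> nat \<Rightarrow> 'a" where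
  "rep n s u c i a =
     (\<Sum>j<s - 1. c i (j + 1) (set_digit s n a u ((digit s n a u + j) mod s)))
     + c i (s + u - 1) (set_digit s n a u ((digit s n a u + (s - 1)) mod s))"

end

theory Submission
  imports Defs "HOL-Computational_Algebra.Polynomial"
begin
lemma pow_split1: "i' < i \<Longrightarrow> i \<le> n \<Longrightarrow> (s::nat)^(n-i') = (s*s^(n-i)) * s^(i - i' - 1)"
proof -
  assume "i' < i" "i \<le> n"
  then have "n-i' = Suc ((n-i) + (i-i'-1))" by arith
  then show ?thesis by (metis power_add power_Suc mult.assoc)
qed

lemma pow_split2: "1 \<le> i \<Longrightarrow> i \<le> n \<Longrightarrow> (s::nat)^n = s^(i-1) * (s*s^(n-i))"
proof -
  assume "1 \<le> i" "i \<le> n"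
  then have "n = (i-1) + Suc (n-i)" by arith
  then show ?thesis by (metis power_add power_Suc)
qed

lemma pow_dvd: "i < i' \<Longrightarrow> i' \<le> n \<Longrightarrow> (s::nat) * s^(n-i') dvd s^(n-i)"
proof -
  assume "i < i'" "i' \<le> n"
  then have "n-i = Suc (n-i') + (i'-i-1)" by arith
  then have "s^(n-i) = (s * s^(n-i')) * s^(i'-i-1)" by (metis power_add power_Suc)
  then show ?thesis by simp
qed
lemma div_mod_decomp:
  fixes a p s :: nat
  shows "a = (a div (s*p))*(s*p) + ((a div p) mod s) * p + a mod p"
proof -
  have "a = (a div p) * p + a mod p" by simp
  also have "a div p = (a div p div s) * s + (a div p) mod s" by simp
  also have "a div p div s = a div (s*p)" by (simp add: div_mult2_eq mult.commute)
  finally show ?thesis by (simp add: algebra_simps)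
qed

lemma sd_formula:
  "set_digit s n a i v = (a div (s*s^(n-i)))*(s*s^(n-i)) + v * s^(n-i) + a mod s^(n-i)"
proof -
  define p where "p = s^(n-i)"
  define X where "X = a div (s*p)"
  define D where "D = digit s n a i"
  define r where "r = a mod p"
  have e: "a = X*(s*p) + D * p + r"
    unfolding X_def D_def r_def digit_def p_def by (rule div_mod_decomp)
  have "a - D * p = X*(s*p) + r" using e by linarith
  then have "set_digit s n a i v = X*(s*p) + v*p + r"
    unfolding set_digit_def D_def[symmetric] p_def[symmetric] by simp
  then show ?thesis unfolding X_def r_def p_def .
qed

lemma digit_alt: "digit s n a i = (a mod (s * s^(n-i))) div s^(n-i)"
proof (cases "s = 0")
  case True then show ?thesis unfolding digit_def by simp
next
  case False
  define q where "q = s^(n-i)"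
  have q: "q > 0" using False unfolding q_def by simp
  have "a mod (q * s) = q * (a div q mod s) + a mod q" by (rule mod_mult2_eq)
  then have "a mod (s*q) div q = a div q mod s" using q by (simp add: mult.commute)
  then show ?thesis unfolding digit_def q_def by simp
qed
lemma digit_le: "digit s n a i * s^(n-i) \<le> a"
proof -
  have "a = (a div (s*s^(n-i)))*(s*s^(n-i)) + digit s n a i * s^(n-i) + a mod s^(n-i)"
    unfolding digit_def by (rule div_mod_decomp)
  then show ?thesis by linarith
qed
lemma sd_self: "set_digit s n a i (digit s n a i) = a"
  using digit_le[of s n a i] unfolding set_digit_def by simp

lemma small_part:
  fixes s v a :: nat
  assumes "0 < s" "v < s"
  shows "v * s^(n-i) + a mod s^(n-i) < s*s^(n-i)"
proof -
  have "a mod s^(n-i) < s^(n-i)" by (intro mod_less_divisor) (simp add: assms)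
  moreover have "v * s^(n-i) + s^(n-i) \<le> s * s^(n-i)" using assms(2)
    by (metis add.commute mult_Suc mult_le_mono1 Suc_leI)
  ultimately show ?thesis by linarith
qed

lemma digit_sd_same:
  assumes "0 < s" "v < s"
  shows "digit s n (set_digit s n a i v) i = v"
proof -
  define p where "p = s^(n-i)"
  have pp: "p > 0" using assms unfolding p_def by simp
  have r: "a mod p < p" using pp by simp
  have "set_digit s n a i v = ((a div (s*p))*s + v) * p + a mod p"
    unfolding sd_formula p_def by (simp add: algebra_simps)
  then have "set_digit s n a i v div p = (a div (s*p))*s + v"
    using pp r by simp
  then show ?thesis unfolding digit_def p_def[symmetric] using assms by simp
qed

lemma sd_sd:
  assumes "0 < s" "v < s"
  shows "set_digit s n (set_digit s n a i v) i w = set_digit s n a i w"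
  using digit_le[of s n a i]
  unfolding set_digit_def[of _ _ "set_digit s n a i v"] digit_sd_same[OF assms]
  unfolding set_digit_def by simp

lemma sd_less:
  assumes "0 < s" "v < s" "a < s^n" "1 \<le> i" "i \<le> n"
  shows "set_digit s n a i v < s^n"
proof -
  define p where "p = s^(n-i)"
  have sn: "s^n = s^(i-1) * (s*p)" using pow_split2[OF assms(4,5)] unfolding p_def .
  have pos: "s*p > 0" using assms unfolding p_def by simp
  have X: "a div (s*p) < s^(i-1)" using assms(3) sn pos
    by (simp add: div_less_iff_less_mult)
  have "set_digit s n a i v < (a div (s*p) + 1) * (s*p)"
    using small_part[OF assms(1,2), of n i a]
    unfolding sd_formula p_def[symmetric] by (simp add: algebra_simps)
  also have "\<dots> \<le> s^(i-1) * (s*p)" using X by (intro mult_le_mono1) simp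
  finally show ?thesis using sn by simp
qed

lemma digit_sd_other:
  assumes "0 < s" "v < s" "i' \<noteq> i" "i \<le> n" "i' \<le> n"
  shows "digit s n (set_digit s n a i v) i' = digit s n a i'"
proof (cases "i' < i")
  case True
  define p where "p = s^(n-i)"
  have q: "s^(n-i') = (s*p) * s^(i - i' - 1)" using pow_split1[OF True assms(4)] unfolding p_def .
  have pos: "s*p > 0" using assms unfolding p_def by simp
  have "set_digit s n a i v = (a div (s*p))*(s*p) + (v * p + a mod p)"
    unfolding sd_formula p_def by simp
  moreover have "v * p + a mod p < s*p"
    using small_part[OF assms(1,2), of n i a] unfolding p_def .
  ultimately have "set_digit s n a i v div (s*p) = a div (s*p)"
    using pos by simp
  then show ?thesis unfolding digit_def q
    by (metis div_mult2_eq)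
next
  case False
  then have lt: "i < i'" using assms by simp
  define p where "p = s^(n-i)"
  define q where "q = s^(n-i')"
  have dv: "s * q dvd p" using pow_dvd[OF lt assms(5)] unfolding p_def q_def .
  have "set_digit s n a i v = ((a div (s*p))*s + v) * p + a mod p"
    unfolding sd_formula p_def by (simp add: algebra_simps)
  then have "set_digit s n a i v mod p = a mod p" by simp
  then have "set_digit s n a i v mod (s*q) = a mod (s*q)"
    by (metis dv mod_mod_cancel)
  then show ?thesis unfolding digit_alt q_def by simp
qed

lemma modsmall: "(x::nat) < s \<Longrightarrow> j < s \<Longrightarrow> (x + j) mod s = (if x + j < s then x + j else x + j - s)"
  by (simp add: mod_if le_mod_geq)
lemma modinj: "(x::nat) < s \<Longrightarrow> (j::nat) < s \<Longrightarrow> j' < s \<Longrightarrow> (x + j) mod s = (x + j') mod s \<Longrightarrow> j = j'"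
  by (simp add: modsmall split: if_splits)
lemma modback: "(x::nat) < s \<Longrightarrow> j < s \<Longrightarrow> ((x + (s - j)) mod s + j) mod s = x"
  by (metis group_cancel.add1 le_add_diff_inverse2 less_or_eq_imp_le
    mod_add_left_eq mod_add_self2 mod_if)
lemma vander_zero:
  fixes x :: "'b \<Rightarrow> 'a::field" and y :: "'b \<Rightarrow> 'a"
  assumes fin: "finite S" and inj: "inj_on x S" and cardS: "card S \<le> N"
    and eqs: "\<And>t. t < N \<Longrightarrow> (\<Sum>l\<in>S. x l ^ t * y l) = 0"
    and l0: "l0 \<in> S"
  shows "y l0 = 0"
proof -
  define p where "p = (\<Prod>l\<in>S - {l0}. [:- x l, 1:])"
  have "degree p \<le> sum (degree \<circ> (\<lambda>l. [:- x l, 1:])) (S - {l0})"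
    unfolding p_def using fin by (intro degree_prod_sum_le) auto
  also have "\<dots> = card (S - {l0})" by simp
  finally have degp: "degree p < N" using cardS l0 fin
    by (metis card_Diff1_less le_less_trans order.strict_trans2)
  have "(\<Sum>l\<in>S. poly p (x l) * y l) = (\<Sum>l\<in>S. \<Sum>i\<le>degree p. coeff p i * (x l ^ i * y l))"
    by (simp add: poly_altdef sum_distrib_right mult.assoc)
  also have "\<dots> = (\<Sum>i\<le>degree p. coeff p i * (\<Sum>l\<in>S. x l ^ i * y l))"
    by (subst sum.swap) (simp add: sum_distrib_left)
  also have "\<dots> = 0" using degp eqs by simp
  finally have s0: "(\<Sum>l\<in>S. poly p (x l) * y l) = 0" .
  have z: "poly p (x l) = 0" if "l \<in> S - {l0}" for l
    unfolding p_def poly_prod using that fin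
    by (intro prod_zero) (auto intro!: bexI[of _ l])
  have "(\<Sum>l\<in>S. poly p (x l) * y l) = poly p (x l0) * y l0"
    using fin l0 z by (intro sum.remove[THEN trans]) (auto intro!: sum.neutral)
  with s0 have "poly p (x l0) * y l0 = 0" by simp
  moreover have "poly p (x l0) \<noteq> 0"
    unfolding p_def poly_prod using fin inj l0
    by (auto simp: inj_on_def)
  ultimately show ?thesis by simp
qed

lemma rep_diff:
  "rep n s u (\<lambda>i b a. c i b a - c' i b a) i a = rep n s u c i a - rep n s u c' i a"
  unfolding rep_def by (simp add: sum_subtractf)

lemma key:
  fixes lam :: "nat \<Rightarrow> nat \<Rightarrow> 'a::field" and e :: "nat \<Rightarrow> nat \<Rightarrow> nat \<Rightarrow> 'a"
  assumes s0: "0 < s" and u: "u \<in> {1..n}"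
    and inj: "inj_on (\<lambda>(i, j). lam i j) ({1..n} \<times> {0..<s})"
    and R: "R \<subseteq> {1..n} - {u}" and cR: "card R = d"
    and cnt: "n - 1 + s - d \<le> N"
    and par: "\<And>t b a. t < N \<Longrightarrow> b \<in> B \<Longrightarrow> a < s ^ n \<Longrightarrow>
        (\<Sum>i=1..n. lam i (digit s n a i) ^ t * e i b a) = 0"
    and bB: "\<And>j. j < s \<Longrightarrow> (if j < s - 1 then j + 1 else s + u - 1) \<in> B"
    and a: "a < s ^ n"
    and Rz: "\<And>i. i \<in> R \<Longrightarrow> rep n s u e i a = 0"
  shows "(\<forall>j<s. e u (if j < s - 1 then j + 1 else s + u - 1)
              (set_digit s n a u ((digit s n a u + j) mod s)) = 0)
       \<and> (\<forall>i\<in>{1..n} - {u} - R. rep n s u e i a = 0)"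
proof -
  define bj where "bj j = (if j < s - 1 then j + 1 else s + u - 1)" for j
  define aj where "aj j = set_digit s n a u ((digit s n a u + j) mod s)" for j
  define du where "du = digit s n a u"
  have du: "du < s" unfolding du_def digit_def using s0 by simp
  define S :: "(nat + nat) set" where "S = Inl ` ({1..n} - {u}) \<union> Inr ` {0..<s}"
  define K :: "(nat + nat) set" where "K = Inl ` R"
  define x where "x l = (case l of Inl i \<Rightarrow> lam i (digit s n a i) | Inr j \<Rightarrow> lam u ((du + j) mod s))" for l
  define y where "y l = (case l of Inl i \<Rightarrow> rep n s u e i a | Inr j \<Rightarrow> e u (bj j) (aj j))" for l
  have finS: "finite S" unfolding S_def by simp
  have KS: "K \<subseteq> S" unfolding K_def S_def using R by auto
  have dig_lt: "digit s n a' i < s" for a' i unfolding digit_def using s0 by simp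
  have injD: "i = i' \<and> v = v'" if "lam i v = lam i' v'" "i \<in> {1..n}" "v < s" "i' \<in> {1..n}" "v' < s" for i v i' v'
    using inj_onD[OF inj, of "(i, v)" "(i', v')"] that by auto
  have modlt: "(du + j) mod s < s" for j using s0 by simp
  have injS: "inj_on x S"
  proof (rule inj_onI)
    fix l l' assume l: "l \<in> S" and l': "l' \<in> S" and eq: "x l = x l'"
    show "l = l'"
    proof (cases l)
      case (Inl i)
      note li = Inl
      have i: "i \<in> {1..n}" "i \<noteq> u" using l li unfolding S_def by auto
      show ?thesis
      proof (cases l')
        case (Inl i')
        have i': "i' \<in> {1..n}" using l' Inl unfolding S_def by auto
        have "lam i (digit s n a i) = lam i' (digit s n a i')" using eq li Inl unfolding x_def by simp
        then show ?thesis using injD i i' dig_lt li Inl by blast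
      next
        case (Inr j')
        have "lam i (digit s n a i) = lam u ((du + j') mod s)" using eq li Inr unfolding x_def by simp
        then have "i = u" using injD i u dig_lt modlt by blast
        then show ?thesis using i by simp
      qed
    next
      case (Inr j)
      note lj = Inr
      have j: "j < s" using l lj unfolding S_def by auto
      show ?thesis
      proof (cases l')
        case (Inl i')
        have i': "i' \<in> {1..n}" "i' \<noteq> u" using l' Inl unfolding S_def by auto
        have "lam i' (digit s n a i') = lam u ((du + j) mod s)" using eq lj Inl unfolding x_def by simp
        then have "i' = u" using injD i' u dig_lt modlt by blast
        then show ?thesis using i' by simp
      next
        case (Inr j')
        have j': "j' < s" using l' Inr unfolding S_def by auto
        have "lam u ((du + j) mod s) = lam u ((du + j') mod s)" using eq lj Inr unfolding x_def by simp
        then have "(du + j) mod s = (du + j') mod s" using injD u modlt by blast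
        then have "j = j'" using modinj[OF du j j'] by simp
        then show ?thesis using lj Inr by simp
      qed
    qed
  qed
  have cardS: "card S = (n - 1) + s"
  proof -
    have "card S = card (Inl ` ({1..n} - {u}) :: (nat+nat) set) + card (Inr ` {0..<s} :: (nat+nat) set)"
      unfolding S_def by (rule card_Un_disjoint) auto
    also have "\<dots> = card ({1..n} - {u}) + card {0..<s}"
      by (simp add: card_image)
    also have "\<dots> = (n - 1) + s" using u by simp
    finally show ?thesis .
  qed
  have cardK: "card K = d" unfolding K_def using cR by (simp add: card_image)
  have cardSK: "card (S - K) \<le> N"
  proof -
    have "card (S - K) = card S - card K"
      by (rule card_Diff_subset[OF finite_subset[OF KS finS] KS])
    then show ?thesis using cnt cardS cardK by simp
  qed
  have yK: "y l = 0" if "l \<in> K" for l using that Rz unfolding K_def y_def by auto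
  have aj_lt: "aj j < s ^ n" for j
    unfolding aj_def using sd_less[OF s0 _ a] u s0 by simp
  have dig_aj_u: "digit s n (aj j) u = (du + j) mod s" for j
    unfolding aj_def du_def using digit_sd_same s0 by simp
  have dig_aj_i: "digit s n (aj j) i = digit s n a i" if "i \<in> {1..n} - {u}" for i j
    unfolding aj_def using digit_sd_other[OF s0 _ _ _ _] that u s0 by simp
  have rep_eq: "rep n s u e i a = (\<Sum>j<s. e i (bj j) (aj j))" for i
  proof -
    have ss: "s = Suc (s - 1)" using s0 by simp
    have "(\<Sum>j<s. e i (bj j) (aj j)) = (\<Sum>j<s - 1. e i (bj j) (aj j)) + e i (bj (s-1)) (aj (s-1))"
      by (subst ss, subst sum.lessThan_Suc) simp
    also have "(\<Sum>j<s - 1. e i (bj j) (aj j)) = (\<Sum>j<s - 1. e i (j + 1) (aj j))"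
      by (rule sum.cong) (auto simp: bj_def)
    finally show ?thesis unfolding rep_def aj_def bj_def du_def by simp
  qed
  have eqs: "(\<Sum>l\<in>S - K. x l ^ t * y l) = 0" if t: "t < N" for t
  proof -
    have "(\<Sum>l\<in>S - K. x l ^ t * y l) = (\<Sum>l\<in>S. x l ^ t * y l)"
      using finS KS yK by (intro sum.mono_neutral_left) auto
    also have "\<dots> = (\<Sum>l\<in>Inl ` ({1..n} - {u}). x l ^ t * y l) + (\<Sum>l\<in>Inr ` {0..<s}. x l ^ t * y l)"
      unfolding S_def by (rule sum.union_disjoint) auto
    also have "\<dots> = (\<Sum>i\<in>{1..n} - {u}. lam i (digit s n a i) ^ t * rep n s u e i a)
         + (\<Sum>j<s. lam u ((du + j) mod s) ^ t * e u (bj j) (aj j))"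
      by (simp add: sum.reindex x_def y_def lessThan_atLeast0)
    also have "\<dots> = (\<Sum>j<s. \<Sum>i=1..n. lam i (digit s n (aj j) i) ^ t * e i (bj j) (aj j))"
    proof -
      have "(\<Sum>j<s. \<Sum>i=1..n. lam i (digit s n (aj j) i) ^ t * e i (bj j) (aj j))
          = (\<Sum>j<s. lam u ((du + j) mod s) ^ t * e u (bj j) (aj j)
               + (\<Sum>i\<in>{1..n} - {u}. lam i (digit s n a i) ^ t * e i (bj j) (aj j)))"
      proof (rule sum.cong[OF refl])
        fix j
        have "(\<Sum>i=1..n. lam i (digit s n (aj j) i) ^ t * e i (bj j) (aj j))
           = lam u (digit s n (aj j) u) ^ t * e u (bj j) (aj j)
             + (\<Sum>i\<in>{1..n} - {u}. lam i (digit s n (aj j) i) ^ t * e i (bj j) (aj j))"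
          using u by (intro sum.remove) auto
        also have "(\<Sum>i\<in>{1..n} - {u}. lam i (digit s n (aj j) i) ^ t * e i (bj j) (aj j))
           = (\<Sum>i\<in>{1..n} - {u}. lam i (digit s n a i) ^ t * e i (bj j) (aj j))"
          by (rule sum.cong) (auto simp: dig_aj_i)
        finally show "(\<Sum>i=1..n. lam i (digit s n (aj j) i) ^ t * e i (bj j) (aj j))
          = lam u ((du + j) mod s) ^ t * e u (bj j) (aj j)
               + (\<Sum>i\<in>{1..n} - {u}. lam i (digit s n a i) ^ t * e i (bj j) (aj j))"
          by (simp add: dig_aj_u)
      qed
      also have "\<dots> = (\<Sum>j<s. lam u ((du + j) mod s) ^ t * e u (bj j) (aj j))
          + (\<Sum>i\<in>{1..n} - {u}. lam i (digit s n a i) ^ t * (\<Sum>j<s. e i (bj j) (aj j)))"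
        by (simp add: sum.distrib sum_distrib_left, rule sum.swap)
      finally show ?thesis by (simp add: rep_eq)
    qed
    also have "\<dots> = 0"
      using par[OF t bB aj_lt] by (simp add: bj_def)
    finally show ?thesis .
  qed
  have yz: "y l = 0" if "l \<in> S - K" for l
    by (rule vander_zero[where S = "S - K" and x = x and N = N])
       (use finS injS cardSK eqs that in \<open>auto intro: inj_on_subset\<close>)
  show ?thesis
  proof (intro conjI allI impI ballI)
    fix j assume "j < s"
    then have "Inr j \<in> S - K" unfolding S_def K_def by auto
    then show "e u (if j < s - 1 then j + 1 else s + u - 1) (set_digit s n a u ((digit s n a u + j) mod s)) = 0"
      using yz unfolding y_def bj_def aj_def by fastforce
  next
    fix i assume "i \<in> {1..n} - {u} - R"
    then have "Inl i \<in> S - K" unfolding S_def K_def by auto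
    then show "rep n s u e i a = 0" using yz unfolding y_def by fastforce
  qed
qed

theorem mainTheorem5:
  fixes n k h d s :: nat and lam :: "nat \<Rightarrow> nat \<Rightarrow> 'a::{finite,field}"
    and R :: "nat set" and u :: nat
  assumes "k \<ge> 1" and "2 \<le> h" and "h + d \<le> n" and "k \<le> d"
    and "s = d + 1 - k"
    and "card (UNIV :: 'a set) \<ge> s * n"
    and "inj_on (\<lambda>(i, j). lam i j) ({1..n} \<times> {0..<s})"
    and "R \<subseteq> {1..n} - {1..h}" and "card R = d"
    and "u \<in> {1..h}"
  shows "\<forall>c\<in>code n k h d s lam. \<forall>c'\<in>code n k h d s lam.
     (\<forall>a<s ^ n. \<forall>i\<in>R. rep n s u c i a = rep n s u c' i a) \<longrightarrow>
     ((\<forall>a<s ^ n. \<forall>b\<in>{1..s - 1} \<union> {s + u - 1}. c u b a = c' u b a) \<and>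
      (\<forall>a<s ^ n. \<forall>i\<in>{1..h} - {u}. rep n s u c i a = rep n s u c' i a))"
proof (intro ballI impI conjI)
  fix c c' assume c: "c \<in> code n k h d s lam" and c': "c' \<in> code n k h d s lam"
    and H: "\<forall>a<s ^ n. \<forall>i\<in>R. rep n s u c i a = rep n s u c' i a"
  define e where "e = (\<lambda>i b a. c i b a - c' i b a)"
  have s0: "0 < s" using assms(4,5) by simp
  have u: "u \<in> {1..n}" using assms(2,3,10) by auto
  have R: "R \<subseteq> {1..n} - {u}" using assms(8,10) by auto
  have cnt: "n - 1 + s - d \<le> n - k" using assms(1-5) by arith
  have par: "(\<Sum>i=1..n. lam i (digit s n a i) ^ t * e i b a) = 0"
    if "t < n - k" "b \<in> {1..d + h - k}" "a < s ^ n" for t b a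
  proof -
    have "(\<Sum>i=1..n. lam i (digit s n a i) ^ t * c i b a) = 0"
      using c that unfolding code_def by blast
    moreover have "(\<Sum>i=1..n. lam i (digit s n a i) ^ t * c' i b a) = 0"
      using c' that unfolding code_def by blast
    ultimately show ?thesis unfolding e_def by (simp add: right_diff_distrib sum_subtractf)
  qed
  have bB: "(if j < s - 1 then j + 1 else s + u - 1) \<in> {1..d + h - k}" if "j < s" for j
    using that assms(1-5,10) by auto
  have Rz: "rep n s u e i a = 0" if "a < s ^ n" "i \<in> R" for i a
    using H that unfolding e_def rep_diff by simp
  have K: "(\<forall>j<s. e u (if j < s - 1 then j + 1 else s + u - 1)
              (set_digit s n a u ((digit s n a u + j) mod s)) = 0)
       \<and> (\<forall>i\<in>{1..n} - {u} - R. rep n s u e i a = 0)" if a: "a < s ^ n" for a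
    by (rule key[OF s0 u assms(7) R assms(9) cnt par bB a Rz]) (use a in auto)
  show "\<forall>a<s ^ n. \<forall>b\<in>{1..s - 1} \<union> {s + u - 1}. c u b a = c' u b a"
  proof (intro allI impI ballI)
    fix a b assume a: "a < s ^ n" and b: "b \<in> {1..s - 1} \<union> {s + u - 1}"
    define j where "j = (if b < s then b - 1 else s - 1)"
    have j: "j < s" unfolding j_def using s0 by auto
    have bj: "(if j < s - 1 then j + 1 else s + u - 1) = b"
      using b s0 u unfolding j_def by auto
    define du where "du = digit s n a u"
    have du: "du < s" unfolding du_def digit_def using s0 by simp
    define a' where "a' = set_digit s n a u ((du + (s - j)) mod s)"
    have ml: "(du + (s - j)) mod s < s" using s0 by simp
    have a': "a' < s ^ n" unfolding a'_def using sd_less[OF s0 ml a] u by simp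
    have "digit s n a' u = (du + (s - j)) mod s"
      unfolding a'_def using digit_sd_same[OF s0 ml] .
    then have "(digit s n a' u + j) mod s = du" using modback[OF du j] by simp
    then have "set_digit s n a' u ((digit s n a' u + j) mod s) = a"
      unfolding a'_def using sd_sd[OF s0 ml] sd_self du_def by simp
    then have "e u b a = 0" using K[OF a'] j bj by metis
    then show "c u b a = c' u b a" unfolding e_def by simp
  qed
  show "\<forall>a<s ^ n. \<forall>i\<in>{1..h} - {u}. rep n s u c i a = rep n s u c' i a"
  proof (intro allI impI ballI)
    fix a i assume a: "a < s ^ n" and i: "i \<in> {1..h} - {u}"
    have "i \<in> {1..n} - {u} - R" using i assms(3,8) by auto
    then have "rep n s u e i a = 0" using K[OF a] by blast
    then show "rep n s u c i a = rep n s u c' i a" unfolding e_def rep_diff by simp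
  qed
qed

end
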